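(* Let $k,n$ be integers with $2\le k\le n-2$. Then, as polynomials in $t$, $$i(\mathrm{Sp}_{k,n},t)=i(\mathrm{Sp}_{n-k,n},t)=i(U_{k,n},t)-i(T_{k,n},t-1).$$
   Context: For $S,T\subseteq[n]$, write $T\le S$ if $|T|=|S|$ and the $i$-th smallest element of $T$ is at most the $i$-th smallest element of $S$ for each $i$. The Schubert matroid $\mathrm{SM}_n(S)$ is the matroid on $[n]$ with bases $\{T\subseteq[n]:T\le S\}$. For a matroid $M$ on $[n]$, $i(M,t)$ is the Ehrhart polynomial of its matroid polytope $\mathrm{conv}\{\sum_{b\in B}e_b: B\text{ a basis}\}$ (the polynomial counting lattice points in the $t$-th dilate for positive integers $t$), and $i(M,t-1)$ is this polynomial evaluated at $t-1$. $U_{k,n}=\mathrm{SM}_n(\{n-k+1,\dots,n\})$; $T_{k,n}=\mathrm{SM}_n(\{2,3,\dots,k,n\})$; $\mathrm{Sp}_{k,n}=\mathrm{SM}_n(\{k\}\cup\{k+2,\dots,n\})$. *)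

theory Defs
  imports Complex_Main "HOL-Computational_Algebra.Polynomial"
begin

definition gale_le :: "nat set \<Rightarrow> nat set \<Rightarrow> bool" where
  "gale_le T S \<longleftrightarrow> card T = card S \<and>
     (\<forall>i < card S. sorted_list_of_set T ! i \<le> sorted_list_of_set S ! i)"

text \<open>A matroid on [n] = {1..n} is represented by its set of bases.
Schubert matroid SM_n(S): bases are the T \<subseteq> [n] with T \<le> S.\<close>
definition schubert_bases :: "nat \<Rightarrow> nat set \<Rightarrow> nat set set" where
  "schubert_bases n S = {T. T \<subseteq> {1..n} \<and> gale_le T S}"

text \<open>Lattice points (integer vectors indexed by [n], zero outside [n]) of the
t-th dilate of the polytope conv{ e_B : B \<in> bases }.\<close>
definition dilate_lattice_points :: "nat \<Rightarrow> nat set set \<Rightarrow> nat \<Rightarrow> (nat \<Rightarrow> int) set" where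
  "dilate_lattice_points n bases t =
     {x. (\<forall>i. i \<notin> {1..n} \<longrightarrow> x i = 0) \<and>
         (\<exists>l :: nat set \<Rightarrow> real. (\<forall>B\<in>bases. l B \<ge> 0) \<and> (\<Sum>B\<in>bases. l B) = 1 \<and>
            (\<forall>i\<in>{1..n}. real_of_int (x i) = real t * (\<Sum>B\<in>bases. l B * (if i \<in> B then 1 else 0))))}"

definition ehrhart_poly :: "nat \<Rightarrow> nat set set \<Rightarrow> real poly" where
  "ehrhart_poly n bases = (THE p. \<forall>t::nat. t \<ge> 1 \<longrightarrow>
      poly p (real t) = real (card (dilate_lattice_points n bases t)))"

definition U_bases :: "nat \<Rightarrow> nat \<Rightarrow> nat set set" where
  "U_bases k n = schubert_bases n {n - k + 1..n}"

definition T_bases :: "nat \<Rightarrow> nat \<Rightarrow> nat set set" where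
  "T_bases k n = schubert_bases n ({2..k} \<union> {n})"

definition Sp_bases :: "nat \<Rightarrow> nat \<Rightarrow> nat set set" where
  "Sp_bases k n = schubert_bases n ({k} \<union> {k + 2..n})"

end

theory Submission
  imports Defs
begin

lemma sorted_nth_le_iff:
  fixes T :: "nat set"
  assumes fin: "finite T" and j: "j < card T"
  shows "sorted_list_of_set T ! j \<le> v \<longleftrightarrow> j < card {a\<in>T. a \<le> v}"
proof -
  define xs where "xs = sorted_list_of_set T"
  have st: "sorted_wrt (<) xs" and sx: "set xs = T" and lx: "length xs = card T"
    using fin by (auto simp: xs_def)
  have dx: "distinct xs" using fin by (simp add: xs_def)
  have mono: "i \<le> i' \<Longrightarrow> i' < length xs \<Longrightarrow> xs ! i \<le> xs ! i'" for i i'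
    using sorted_wrt_nth_less[OF st, of i i'] by (cases "i = i'") auto
  have inj: "inj_on ((!) xs) {..<length xs}"
    using dx by (auto simp: inj_on_def nth_eq_iff_index_eq)
  have fs: "finite {a\<in>T. a \<le> v}" using fin by simp
  show ?thesis
  proof
    assume h: "sorted_list_of_set T ! j \<le> v"
    have "((!) xs) ` {..j} \<subseteq> {a\<in>T. a \<le> v}"
      using h mono j lx sx unfolding xs_def[symmetric] by (force)
    moreover have "card (((!) xs) ` {..j}) = Suc j"
      using inj j lx by (subst card_image) (auto intro: inj_on_subset)
    ultimately have "Suc j \<le> card {a\<in>T. a \<le> v}"
      using card_mono[OF fs] by metis
    then show "j < card {a\<in>T. a \<le> v}" by simp
  next
    assume h: "j < card {a\<in>T. a \<le> v}"
    show "sorted_list_of_set T ! j \<le> v"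
    proof (rule ccontr)
      assume "\<not> ?thesis"
      then have hv: "v < xs ! j" by (simp add: xs_def)
      have "{a\<in>T. a \<le> v} \<subseteq> ((!) xs) ` {..<j}"
      proof
        fix a assume "a \<in> {a\<in>T. a \<le> v}"
        then obtain i where i: "i < length xs" "a = xs ! i" "a \<le> v"
          using sx by (auto simp: in_set_conv_nth)
        have "i < j" using mono[of j i] i hv by (cases "j \<le> i") auto
        then show "a \<in> ((!) xs) ` {..<j}" using i by auto
      qed
      then have "card {a\<in>T. a \<le> v} \<le> card (((!) xs) ` {..<j})"
        by (intro card_mono) auto
      also have "\<dots> \<le> j" using card_image_le[of "{..<j}" "(!) xs"] by simp
      finally have "card {a\<in>T. a \<le> v} \<le> j" .
      then show False using h by simp
    qed
  qed
qed

definition Mb :: "nat \<Rightarrow> nat \<Rightarrow> nat \<Rightarrow> nat \<Rightarrow> nat set set" where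
  "Mb n r m c = {B. B \<subseteq> {1..n} \<and> card B = r \<and> c \<le> card (B \<inter> {1..m})}"

lemma gale_char:
  assumes "finite B" "finite S"
  shows "gale_le B S \<longleftrightarrow> card B = card S \<and>
     (\<forall>i<card S. i < card {a\<in>B. a \<le> sorted_list_of_set S ! i})"
  using sorted_nth_le_iff[OF assms(1)] unfolding gale_le_def by auto

lemma cnt_drop:
  assumes "finite B" "v \<le> w"
  shows "card {a\<in>B. a \<le> w} \<le> card {a\<in>B. a \<le> v} + (w - v)"
proof -
  have "{a\<in>B. a \<le> w} \<subseteq> {a\<in>B. a \<le> v} \<union> {v<..w}" by auto
  then have "card {a\<in>B. a \<le> w} \<le> card ({a\<in>B. a \<le> v} \<union> {v<..w})"
    using assms by (intro card_mono) auto
  also have "\<dots> \<le> card {a\<in>B. a \<le> v} + card {v<..w}" by (rule card_Un_le)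
  finally show ?thesis by simp
qed

lemma cnt_all: "B \<subseteq> {1..n} \<Longrightarrow> {a\<in>B. a \<le> n} = B" by auto
lemma cnt_int: "B \<subseteq> {1..n} \<Longrightarrow> {a\<in>B. a \<le> m} = B \<inter> {1..m}" by auto

lemma U_bases_eq:
  assumes "k \<le> n"
  shows "U_bases k n = Mb n k 0 0"
proof -
  have sl: "sorted_list_of_set {n - k + 1..n} = [n-k+1..<Suc n]"
    by (simp add: atLeastLessThanSuc_atLeastAtMost[symmetric])
  have cS: "card {n - k + 1..n} = k" using assms by simp
  show ?thesis
  proof (rule set_eqI)
    fix B
    show "B \<in> U_bases k n \<longleftrightarrow> B \<in> Mb n k 0 0"
    proof
      assume "B \<in> U_bases k n"
      then show "B \<in> Mb n k 0 0"
        unfolding U_bases_def schubert_bases_def Mb_def gale_le_def using cS by auto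
    next
      assume B: "B \<in> Mb n k 0 0"
      then have Bs: "B \<subseteq> {1..n}" and cB: "card B = k" by (auto simp: Mb_def)
      have fB: "finite B" using Bs finite_subset by blast
      have "i < card {a\<in>B. a \<le> sorted_list_of_set {n - k + 1..n} ! i}" if i: "i < k" for i
      proof -
        have e: "sorted_list_of_set {n - k + 1..n} ! i = n - k + 1 + i" using i assms unfolding sl by (simp del: upt_Suc)
        have "card {a\<in>B. a \<le> n} \<le> card {a\<in>B. a \<le> n - k + 1 + i} + (n - (n - k + 1 + i))"
          using i assms by (intro cnt_drop fB) auto
        then show ?thesis using cnt_all[OF Bs] cB i assms e by simp
      qed
      then show "B \<in> U_bases k n"
        unfolding U_bases_def schubert_bases_def using gale_char[OF fB, of "{n - k + 1..n}"] Bs cB cS by auto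
    qed
  qed
qed

lemma T_bases_eq:
  assumes "2 \<le> k" "k < n"
  shows "T_bases k n = Mb n k k (k - 1)"
proof -
  define S where "S = {2..k} \<union> {n}"
  have fS: "finite S" by (simp add: S_def)
  have cS: "card S = k" using assms by (simp add: S_def)
  have sl: "sorted_list_of_set S = [2..<Suc k] @ [n]"
  proof -
    have "sorted_wrt (<) ([2..<Suc k] @ [n]) \<and> set ([2..<Suc k] @ [n]) = S \<and> length ([2..<Suc k] @ [n]) = card S"
      using assms cS by (auto simp: S_def sorted_wrt_append)
    then show ?thesis using sorted_list_of_set_unique[OF fS] by blast
  qed
  have nth1: "sorted_list_of_set S ! i = i + 2" if "i < k - 1" for i
    using that assms by (auto simp: sl nth_append)
  have nth2: "sorted_list_of_set S ! (k - 1) = n"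
    using assms by (auto simp: sl nth_append)
  show ?thesis
  proof (rule set_eqI)
    fix B
    show "B \<in> T_bases k n \<longleftrightarrow> B \<in> Mb n k k (k - 1)"
    proof
      assume "B \<in> T_bases k n"
      then have Bs: "B \<subseteq> {1..n}" and g: "gale_le B S" by (auto simp: T_bases_def schubert_bases_def S_def)
      have fB: "finite B" using Bs finite_subset by blast
      have cB: "card B = k" and h: "\<And>i. i < k \<Longrightarrow> i < card {a\<in>B. a \<le> sorted_list_of_set S ! i}"
        using g gale_char[OF fB fS] cS by auto
      have "k - 2 < card {a\<in>B. a \<le> sorted_list_of_set S ! (k-2)}" using h assms by simp
      moreover have "sorted_list_of_set S ! (k-2) = k" using nth1[of "k-2"] assms by simp
      ultimately have "k - 2 < card {a\<in>B. a \<le> k}" by simp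
      then have "k - 1 \<le> card (B \<inter> {1..k})" using cnt_int[OF Bs, of k] by simp
      then show "B \<in> Mb n k k (k - 1)" using Bs cB by (simp add: Mb_def)
    next
      assume B: "B \<in> Mb n k k (k - 1)"
      then have Bs: "B \<subseteq> {1..n}" and cB: "card B = k" and ck: "k - 1 \<le> card (B \<inter> {1..k})"
        by (auto simp: Mb_def)
      have fB: "finite B" using Bs finite_subset by blast
      have "i < card {a\<in>B. a \<le> sorted_list_of_set S ! i}" if i: "i < k" for i
      proof (cases "i < k - 1")
        case True
        have "card {a\<in>B. a \<le> k} \<le> card {a\<in>B. a \<le> i + 2} + (k - (i + 2))"
          using True by (intro cnt_drop fB) auto
        then show ?thesis using nth1[OF True] cnt_int[OF Bs, of k] ck True by simp
      next
        case False
        then have "i = k - 1" using i by simp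
        then show ?thesis using nth2 cnt_all[OF Bs] cB assms by simp
      qed
      then show "B \<in> T_bases k n"
        unfolding T_bases_def schubert_bases_def S_def[symmetric]
        using gale_char[OF fB fS] Bs cB cS by auto
    qed
  qed
qed

lemma Sp_bases_eq:
  assumes "1 \<le> k" "k + 2 \<le> n"
  shows "Sp_bases k n = Mb n (n - k) k 1"
proof -
  define S where "S = {k} \<union> {k + 2..n}"
  have fS: "finite S" by (simp add: S_def)
  have cS: "card S = n - k" using assms by (simp add: S_def)
  have sl: "sorted_list_of_set S = k # [k + 2..<Suc n]"
  proof -
    have "sorted_wrt (<) (k # [k + 2..<Suc n]) \<and> set (k # [k + 2..<Suc n]) = S \<and> length (k # [k + 2..<Suc n]) = card S"
      using assms cS by (auto simp: S_def sorted_wrt_append)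
    then show ?thesis using sorted_list_of_set_unique[OF fS] by blast
  qed
  have nth0: "sorted_list_of_set S ! 0 = k" by (simp add: sl)
  have nth1: "sorted_list_of_set S ! i = k + 1 + i" if i0: "0 < i" and "i < n - k" for i
  proof -
    obtain j where j: "i = Suc j" using i0 by (cases i) auto
    show ?thesis using that assms by (simp add: sl j del: upt_Suc)
  qed
  show ?thesis
  proof (rule set_eqI)
    fix B
    show "B \<in> Sp_bases k n \<longleftrightarrow> B \<in> Mb n (n - k) k 1"
    proof
      assume "B \<in> Sp_bases k n"
      then have Bs: "B \<subseteq> {1..n}" and g: "gale_le B S" by (auto simp: Sp_bases_def schubert_bases_def S_def)
      have fB: "finite B" using Bs finite_subset by blast
      have cB: "card B = n - k" and h: "\<And>i. i < n - k \<Longrightarrow> i < card {a\<in>B. a \<le> sorted_list_of_set S ! i}"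
        using g gale_char[OF fB fS] cS by auto
      have "0 < card {a\<in>B. a \<le> k}" using h[of 0] nth0 assms by simp
      then have "1 \<le> card (B \<inter> {1..k})" using cnt_int[OF Bs, of k] by simp
      then show "B \<in> Mb n (n - k) k 1" using Bs cB by (simp add: Mb_def)
    next
      assume B: "B \<in> Mb n (n - k) k 1"
      then have Bs: "B \<subseteq> {1..n}" and cB: "card B = n - k" and ck: "1 \<le> card (B \<inter> {1..k})"
        by (auto simp: Mb_def)
      have fB: "finite B" using Bs finite_subset by blast
      have "i < card {a\<in>B. a \<le> sorted_list_of_set S ! i}" if i: "i < n - k" for i
      proof (cases "i = 0")
        case True
        then show ?thesis using nth0 cnt_int[OF Bs, of k] ck by simp
      next
        case False
        have "card {a\<in>B. a \<le> n} \<le> card {a\<in>B. a \<le> k + 1 + i} + (n - (k + 1 + i))"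
          using i by (intro cnt_drop fB) auto
        then show ?thesis using nth1[of i] False i cnt_all[OF Bs] cB by simp
      qed
      then show "B \<in> Sp_bases k n"
        unfolding Sp_bases_def schubert_bases_def S_def[symmetric]
        using gale_char[OF fB fS] Bs cB cS by auto
    qed
  qed
qed

definition ind :: "nat set \<Rightarrow> nat \<Rightarrow> int" where
  "ind B = (\<lambda>i. if i \<in> B then 1 else 0)"

definition Hf :: "nat \<Rightarrow> nat \<Rightarrow> nat \<Rightarrow> nat \<Rightarrow> nat \<Rightarrow> (nat \<Rightarrow> int) set" where
  "Hf n r m c t = {x. (\<forall>i. i \<notin> {1..n} \<longrightarrow> x i = 0) \<and> (\<forall>i\<in>{1..n}. 0 \<le> x i \<and> x i \<le> int t) \<and>
      (\<Sum>i\<in>{1..n}. x i) = int (r * t) \<and> int (c * t) \<le> (\<Sum>i\<in>{1..m}. x i)}"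

lemma Mb_finite: "finite (Mb n r m c)"
  by (rule finite_subset[of _ "Pow {1..n}"]) (auto simp: Mb_def)

lemma sum_swap_ind:
  fixes l :: "nat set \<Rightarrow> real"
  assumes "finite I" "finite M"
  shows "(\<Sum>i\<in>I. \<Sum>B\<in>M. l B * (if i \<in> B then 1 else 0)) = (\<Sum>B\<in>M. l B * real (card (I \<inter> B)))"
proof -
  have "(\<Sum>i\<in>I. \<Sum>B\<in>M. l B * (if i \<in> B then 1 else 0)) = (\<Sum>B\<in>M. \<Sum>i\<in>I. l B * (if i \<in> B then 1 else 0))"
    by (rule sum.swap)
  also have "\<dots> = (\<Sum>B\<in>M. l B * real (card (I \<inter> B)))"
  proof (rule sum.cong[OF refl])
    fix B
    have "(\<Sum>i\<in>I. l B * (if i \<in> B then 1 else 0)) = l B * (\<Sum>i\<in>I. (if i \<in> B then 1 else 0))"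
      by (simp add: sum_distrib_left)
    also have "(\<Sum>i\<in>I. (if i \<in> B then 1 else 0::real)) = real (card (I \<inter> B))"
      using assms(1) by (simp add: sum.If_cases)
    finally show "(\<Sum>i\<in>I. l B * (if i \<in> B then 1 else 0)) = l B * real (card (I \<inter> B))" .
  qed
  finally show ?thesis .
qed

lemma dil_sub:
  assumes "m \<le> n"
  shows "dilate_lattice_points n (Mb n r m c) t \<subseteq> Hf n r m c t"
proof
  fix x assume "x \<in> dilate_lattice_points n (Mb n r m c) t"
  then obtain l where z: "\<forall>i. i \<notin> {1..n} \<longrightarrow> x i = 0" and l0: "\<forall>B\<in>Mb n r m c. 0 \<le> l B"
    and l1: "(\<Sum>B\<in>Mb n r m c. l B) = 1"
    and xe: "\<forall>i\<in>{1..n}. real_of_int (x i) = real t * (\<Sum>B\<in>Mb n r m c. l B * (if i \<in> B then 1 else 0))"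
    unfolding dilate_lattice_points_def by blast
  define M where "M = Mb n r m c"
  have fM: "finite M" by (simp add: M_def Mb_finite)
  have bnd: "0 \<le> x i \<and> x i \<le> int t" if i: "i \<in> {1..n}" for i
  proof -
    have s0: "0 \<le> (\<Sum>B\<in>M. l B * (if i \<in> B then 1 else 0))"
      using l0 by (intro sum_nonneg) (auto simp: M_def)
    have s1: "(\<Sum>B\<in>M. l B * (if i \<in> B then 1 else 0)) \<le> (\<Sum>B\<in>M. l B)"
      using l0 by (intro sum_mono) (auto simp: M_def)
    have "0 \<le> real_of_int (x i)" using xe i s0 by (simp add: M_def)
    moreover have "real_of_int (x i) \<le> real t"
      using xe i s1 l1 mult_left_mono[OF s1, of "real t"] by (simp add: M_def)
    ultimately show ?thesis by simp
  qed
  have sumI: "real_of_int (\<Sum>i\<in>I. x i) = real t * (\<Sum>B\<in>M. l B * real (card (I \<inter> B)))"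
    if I: "I \<subseteq> {1..n}" for I
  proof -
    have fI: "finite I" using I finite_subset by blast
    have "real_of_int (\<Sum>i\<in>I. x i) = (\<Sum>i\<in>I. real t * (\<Sum>B\<in>M. l B * (if i \<in> B then 1 else 0)))"
      using xe I by (auto simp: M_def intro!: sum.cong)
    also have "\<dots> = real t * (\<Sum>B\<in>M. l B * real (card (I \<inter> B)))"
      by (simp add: sum_distrib_left[symmetric] sum_swap_ind[OF fI fM])
    finally show ?thesis .
  qed
  have "(\<Sum>B\<in>M. l B * real (card ({1..n} \<inter> B))) = (\<Sum>B\<in>M. l B * real r)"
    by (rule sum.cong) (auto simp: M_def Mb_def Int_absorb1)
  then have "real_of_int (\<Sum>i\<in>{1..n}. x i) = real t * (\<Sum>B\<in>M. l B * real r)"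
    using sumI[of "{1..n}"] by simp
  also have "\<dots> = real (r * t)" using l1 by (simp add: M_def sum_distrib_right[symmetric])
  finally have e1: "(\<Sum>i\<in>{1..n}. x i) = int (r * t)" by linarith
  have "(\<Sum>B\<in>M. l B * real c) \<le> (\<Sum>B\<in>M. l B * real (card ({1..m} \<inter> B)))"
    using l0 by (intro sum_mono mult_left_mono) (auto simp: M_def Mb_def Int_commute)
  then have "real t * (\<Sum>B\<in>M. l B * real c) \<le> real t * (\<Sum>B\<in>M. l B * real (card ({1..m} \<inter> B)))"
    by (rule mult_left_mono) simp
  moreover have "real t * (\<Sum>B\<in>M. l B * real c) = real (c * t)"
    using l1 by (simp add: M_def sum_distrib_right[symmetric])
  ultimately have "real (c * t) \<le> real_of_int (\<Sum>i\<in>{1..m}. x i)"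
    using sumI[of "{1..m}"] assms by simp
  then have e2: "int (c * t) \<le> (\<Sum>i\<in>{1..m}. x i)" by linarith
  show "x \<in> Hf n r m c t" unfolding Hf_def using z bnd e1 e2 by blast
qed

lemma dil_base:
  assumes "B \<in> M" "finite M" "B \<subseteq> {1..n}"
  shows "ind B \<in> dilate_lattice_points n M 1"
proof -
  define l where "l = (\<lambda>B'. if B' = B then 1 else 0::real)"
  have "(\<Sum>B'\<in>M. l B') = 1" using assms by (simp add: l_def)
  moreover have "\<forall>i\<in>{1..n}. real_of_int (ind B i) = real 1 * (\<Sum>B'\<in>M. l B' * (if i \<in> B' then 1 else 0))"
  proof
    fix i
    have "(\<Sum>B'\<in>M. l B' * (if i \<in> B' then 1 else 0)) = (\<Sum>B'\<in>M. if B' = B then (if i \<in> B' then 1 else 0) else 0)"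
      by (rule sum.cong) (auto simp: l_def)
    also have "\<dots> = (if i \<in> B then 1 else 0)" using assms by (simp add: sum.delta)
    finally show "real_of_int (ind B i) = real 1 * (\<Sum>B'\<in>M. l B' * (if i \<in> B' then 1 else 0))"
      by (simp add: ind_def)
  qed
  moreover have "\<forall>i. i \<notin> {1..n} \<longrightarrow> ind B i = 0" using assms by (auto simp: ind_def)
  moreover have "\<forall>B'\<in>M. l B' \<ge> 0" by (simp add: l_def)
  ultimately show ?thesis unfolding dilate_lattice_points_def by blast
qed

lemma dil_add:
  assumes x: "x \<in> dilate_lattice_points n M s" and s: "1 \<le> s"
    and B: "B \<in> M" "finite M" "B \<subseteq> {1..n}"
  shows "(\<lambda>i. x i + ind B i) \<in> dilate_lattice_points n M (Suc s)"
proof -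
  obtain l where z: "\<forall>i. i \<notin> {1..n} \<longrightarrow> x i = 0" and l0: "\<forall>B\<in>M. 0 \<le> l B"
    and l1: "(\<Sum>B\<in>M. l B) = 1"
    and xe: "\<forall>i\<in>{1..n}. real_of_int (x i) = real s * (\<Sum>B\<in>M. l B * (if i \<in> B then 1 else 0))"
    using x unfolding dilate_lattice_points_def by blast
  define l' where "l' = (\<lambda>B'. (real s * l B' + (if B' = B then 1 else 0)) / (real s + 1))"
  have "(\<Sum>B'\<in>M. l' B') = (real s * (\<Sum>B'\<in>M. l B') + (\<Sum>B'\<in>M. (if B' = B then 1 else 0))) / (real s + 1)"
    unfolding l'_def by (simp add: sum_divide_distrib[symmetric] sum.distrib sum_distrib_left)
  also have "\<dots> = 1" using l1 B by simp
  finally have s1: "(\<Sum>B'\<in>M. l' B') = 1" .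
  have s0: "\<forall>B'\<in>M. l' B' \<ge> 0" using l0 by (simp add: l'_def)
  have ce: "real_of_int (x i + ind B i) = real (Suc s) * (\<Sum>B'\<in>M. l' B' * (if i \<in> B' then 1 else 0))"
    if i: "i \<in> {1..n}" for i
  proof -
    have "(\<Sum>B'\<in>M. l' B' * (if i \<in> B' then 1 else 0))
        = (\<Sum>B'\<in>M. (real s * l B' + (if B' = B then 1 else 0)) * (if i \<in> B' then 1 else 0)) / (real s + 1)"
      unfolding l'_def by (simp add: sum_divide_distrib)
    then have "real (Suc s) * (\<Sum>B'\<in>M. l' B' * (if i \<in> B' then 1 else 0))
        = (\<Sum>B'\<in>M. (real s * l B' + (if B' = B then 1 else 0)) * (if i \<in> B' then 1 else 0))"
      by (simp add: add.commute)
    also have "\<dots> = real s * (\<Sum>B'\<in>M. l B' * (if i \<in> B' then 1 else 0)) + (\<Sum>B'\<in>M. (if B' = B then 1 else 0) * (if i \<in> B' then 1 else 0))"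
      by (simp add: distrib_right sum.distrib sum_distrib_left mult.assoc)
    also have "(\<Sum>B'\<in>M. (if B' = B then 1 else 0) * (if i \<in> B' then 1 else (0::real))) = (\<Sum>B'\<in>M. if B' = B then (if i \<in> B' then 1 else 0) else 0)"
      by (rule sum.cong) auto
    also have "\<dots> = (if i \<in> B then 1 else 0)" using B by (simp add: sum.delta)
    finally show ?thesis using xe i by (simp add: ind_def)
  qed
  have "\<forall>i. i \<notin> {1..n} \<longrightarrow> x i + ind B i = 0" using z B by (auto simp: ind_def)
  then show ?thesis unfolding dilate_lattice_points_def using s0 s1 ce by blast
qed

lemma between_card:
  assumes "finite Y" "X \<subseteq> Y" "card X \<le> k" "k \<le> card Y"
  shows "\<exists>Z. X \<subseteq> Z \<and> Z \<subseteq> Y \<and> card Z = k"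
proof -
  have fX: "finite X" using assms finite_subset by blast
  have "card (Y - X) = card Y - card X" using assms fX by (simp add: card_Diff_subset)
  then have "k - card X \<le> card (Y - X)" using assms by simp
  then obtain W where W: "W \<subseteq> Y - X" "card W = k - card X" "finite W"
    by (rule obtain_subset_with_card_n)
  have "card (X \<union> W) = card X + card W" using W fX by (intro card_Un_disjoint) auto
  then show ?thesis using W assms by (intro exI[of _ "X \<union> W"]) auto
qed

lemma sum_bounds:
  fixes x :: "nat \<Rightarrow> int"
  assumes "finite A" "\<forall>i\<in>A. 0 \<le> x i \<and> x i \<le> t"
  shows "t * int (card {i\<in>A. x i = t}) \<le> (\<Sum>i\<in>A. x i)"
    and "(\<Sum>i\<in>A. x i) \<le> t * int (card {i\<in>A. 1 \<le> x i})"
proof -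
  have "t * int (card {i\<in>A. x i = t}) = (\<Sum>i\<in>{i\<in>A. x i = t}. x i)" by simp
  also have "\<dots> \<le> (\<Sum>i\<in>A. x i)" using assms by (intro sum_mono2) auto
  finally show "t * int (card {i\<in>A. x i = t}) \<le> (\<Sum>i\<in>A. x i)" .
  have "(\<Sum>i\<in>A. x i) = (\<Sum>i\<in>{i\<in>A. 1 \<le> x i}. x i)"
    by (intro sum.mono_neutral_right) (use assms in auto)
  also have "\<dots> \<le> (\<Sum>i\<in>{i\<in>A. 1 \<le> x i}. t)" using assms by (intro sum_mono) auto
  also have "(\<Sum>i\<in>{i\<in>A. 1 \<le> x i}. t) = t * int (card {i\<in>A. 1 \<le> x i})" by simp
  finally show "(\<Sum>i\<in>A. x i) \<le> t * int (card {i\<in>A. 1 \<le> x i})" .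
qed

lemma lemQ:
  fixes q a c t :: int
  assumes "1 \<le> t" "q * t \<le> a" "c * t \<le> a"
  shows "q \<le> a - c * (t - 1)"
proof (cases "q \<le> c")
  case True
  have "c * (t - 1) = c * t - c" by (simp add: algebra_simps)
  then show ?thesis using True assms(3) by linarith
next
  case False
  have h0: "0 \<le> (q - c) * (t - 1)" using False assms by simp
  have h1: "a - c * (t - 1) - q = (a - q * t) + (q - c) * (t - 1)" by (simp add: algebra_simps)
  have "0 \<le> a - q * t" using assms by simp
  then have "0 \<le> a - c * (t - 1) - q" using h0 h1 by simp
  then show ?thesis by simp
qed

lemma sum_ind: "finite I \<Longrightarrow> (\<Sum>i\<in>I. ind B i) = int (card (I \<inter> B))"
  by (simp add: ind_def sum.If_cases Int_def)

lemma peel: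
  assumes mn: "m \<le> n" and t: "1 \<le> t" and x: "x \<in> Hf n r m c t"
  shows "\<exists>B \<in> Mb n r m c. (\<lambda>i. x i - ind B i) \<in> Hf n r m c (t - 1)"
proof -
  have z: "\<forall>i. i \<notin> {1..n} \<longrightarrow> x i = 0" and bd: "\<forall>i\<in>{1..n}. 0 \<le> x i \<and> x i \<le> int t"
    and sn: "(\<Sum>i\<in>{1..n}. x i) = int (r * t)" and sm: "int (c * t) \<le> (\<Sum>i\<in>{1..m}. x i)"
    using x by (auto simp: Hf_def)
  define A1 where "A1 = {1..m}"
  define A2 where "A2 = {Suc m..n}"
  have Aun: "{1..n} = A1 \<union> A2" and Adis: "A1 \<inter> A2 = {}" using mn by (auto simp: A1_def A2_def)
  have fA1: "finite A1" and fA2: "finite A2" by (auto simp: A1_def A2_def)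
  define a where "a = (\<Sum>i\<in>A1. x i)"
  have s2: "(\<Sum>i\<in>A2. x i) = int (r * t) - a"
    using sn unfolding a_def Aun by (simp add: sum.union_disjoint[OF fA1 fA2 Adis])
  define X1 where "X1 = {i\<in>A1. x i = int t}"
  define Y1 where "Y1 = {i\<in>A1. 1 \<le> x i}"
  define X2 where "X2 = {i\<in>A2. x i = int t}"
  define Y2 where "Y2 = {i\<in>A2. 1 \<le> x i}"
  have bd1: "\<forall>i\<in>A1. 0 \<le> x i \<and> x i \<le> int t" and bd2: "\<forall>i\<in>A2. 0 \<le> x i \<and> x i \<le> int t"
    using bd Aun by auto
  have F1: "int t * int (card X1) \<le> a" "a \<le> int t * int (card Y1)"
    using sum_bounds[OF fA1 bd1] unfolding a_def X1_def Y1_def by auto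
  have F2: "int t * int (card X2) \<le> int (r * t) - a" "int (r * t) - a \<le> int t * int (card Y2)"
    using sum_bounds[OF fA2 bd2] s2 unfolding X2_def Y2_def by auto
  have F3: "int c * int t \<le> a" using sm by (simp add: a_def A1_def)
  have XY1: "X1 \<subseteq> Y1" and XY2: "X2 \<subseteq> Y2" using t by (auto simp: X1_def Y1_def X2_def Y2_def)
  have fY1: "finite Y1" and fY2: "finite Y2" using fA1 fA2 by (auto simp: Y1_def Y2_def)
  have cXY1: "card X1 \<le> card Y1" and cXY2: "card X2 \<le> card Y2"
    using XY1 XY2 fY1 fY2 by (auto intro: card_mono)
  have tp: "0 < int t" using t by simp
  have rt: "int (r * t) = int r * int t" by simp
  have c1: "c \<le> card Y1"
  proof -
    have "int t * int c \<le> int t * int (card Y1)" using F1 F3 by (simp add: mult.commute)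
    then show ?thesis using tp by (simp add: mult_le_cancel_left_pos)
  qed
  have c2: "r \<le> card Y1 + card Y2"
  proof -
    have "int t * int r \<le> int t * int (card Y1 + card Y2)" using F1 F2 rt by (simp add: algebra_simps)
    then show ?thesis using tp by (simp add: mult_le_cancel_left_pos)
  qed
  have c3: "c + card X2 \<le> r"
  proof -
    have "int t * int (c + card X2) \<le> int t * int r" using F2 F3 rt by (simp add: algebra_simps)
    then show ?thesis using tp by (simp add: mult_le_cancel_left_pos)
  qed
  have c4: "card X1 + card X2 \<le> r"
  proof -
    have "int t * int (card X1 + card X2) \<le> int t * int r" using F1 F2 rt by (simp add: algebra_simps)
    then show ?thesis using tp by (simp add: mult_le_cancel_left_pos)
  qed
  define b1 where "b1 = max (max c (card X1)) (r - card Y2)"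
  have b1a: "b1 \<le> card Y1" using c1 cXY1 c2 by (simp add: b1_def)
  have b1b: "b1 + card X2 \<le> r" using c3 c4 cXY2 by (simp add: b1_def)
  have b1c: "card X1 \<le> b1" "c \<le> b1" "r - card Y2 \<le> b1" by (auto simp: b1_def)
  have b1d: "int b1 \<le> a - int c * (int t - 1)"
  proof -
    have q1: "int c \<le> a - int c * (int t - 1)" using lemQ[of "int t" "int c" a "int c"] t F3 by simp
    have q2: "int (card X1) \<le> a - int c * (int t - 1)"
      using lemQ[of "int t" "int (card X1)" a "int c"] t F3 F1 by (simp add: mult.commute)
    have "int (r - card Y2) * int t \<le> a"
    proof (cases "r \<le> card Y2")
      case True then show ?thesis using F3 tp by (simp add: order_trans[OF _ F3])
    next
      case False
      then have "int (r - card Y2) * int t = int r * int t - int t * int (card Y2)"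
        by (simp add: of_nat_diff algebra_simps)
      then show ?thesis using F2 rt by linarith
    qed
    then have q3: "int (r - card Y2) \<le> a - int c * (int t - 1)"
      using lemQ[of "int t" "int (r - card Y2)" a "int c"] t F3 by simp
    show ?thesis unfolding b1_def using q1 q2 q3 by (simp add: max_def)
  qed
  obtain B1 where B1: "X1 \<subseteq> B1" "B1 \<subseteq> Y1" "card B1 = b1"
    using between_card[OF fY1 XY1 b1c(1) b1a] by blast
  have "card X2 \<le> r - b1" using b1b by simp
  moreover have "r - b1 \<le> card Y2" using b1c(3) by simp
  ultimately obtain B2 where B2: "X2 \<subseteq> B2" "B2 \<subseteq> Y2" "card B2 = r - b1"
    using between_card[OF fY2 XY2] by blast
  define B where "B = B1 \<union> B2"
  have B1A: "B1 \<subseteq> A1" and B2A: "B2 \<subseteq> A2" using B1 B2 by (auto simp: Y1_def Y2_def)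
  have fB1: "finite B1" and fB2: "finite B2" using B1A B2A fA1 fA2 finite_subset by blast+
  have cB: "card B = r" unfolding B_def using B1A B2A Adis fB1 fB2 B1 B2 b1b
    by (subst card_Un_disjoint) auto
  have Bm: "B \<inter> {1..m} = B1" using B1A B2A by (auto simp: B_def A1_def A2_def)
  have Bs: "B \<subseteq> {1..n}" using B1A B2A Aun by (auto simp: B_def)
  have BM: "B \<in> Mb n r m c" using Bs cB Bm B1 b1c by (simp add: Mb_def)
  define y where "y = (\<lambda>i. x i - ind B i)"
  have y1: "\<forall>i. i \<notin> {1..n} \<longrightarrow> y i = 0" using z Bs by (auto simp: y_def ind_def)
  have y2: "0 \<le> y i \<and> y i \<le> int (t - 1)" if i: "i \<in> {1..n}" for i
  proof -
    have h1: "i \<in> B \<longrightarrow> 1 \<le> x i" using B1 B2 by (auto simp: B_def Y1_def Y2_def)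
    have h2: "x i = int t \<longrightarrow> i \<in> B" using B1 B2 i Aun by (auto simp: B_def X1_def X2_def)
    have h3: "0 \<le> x i \<and> x i \<le> int t" using bd i by blast
    show ?thesis
    proof (cases "i \<in> B")
      case True then show ?thesis using h1 h3 t by (simp add: y_def ind_def of_nat_diff)
    next
      case False
      then have "x i \<noteq> int t" using h2 by blast
      then show ?thesis using False h3 t by (simp add: y_def ind_def of_nat_diff)
    qed
  qed
  have "(\<Sum>i\<in>{1..n}. y i) = int (r * t) - int (card ({1..n} \<inter> B))"
    unfolding y_def using sn by (simp add: sum_subtractf sum_ind)
  also have "{1..n} \<inter> B = B" using Bs by auto
  finally have y3: "(\<Sum>i\<in>{1..n}. y i) = int (r * (t - 1))"
    using cB t by (simp add: of_nat_diff algebra_simps)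
  have "(\<Sum>i\<in>{1..m}. y i) = (\<Sum>i\<in>{1..m}. x i) - (\<Sum>i\<in>{1..m}. ind B i)"
    unfolding y_def by (rule sum_subtractf)
  also have "(\<Sum>i\<in>{1..m}. ind B i) = int (card ({1..m} \<inter> B))" by (rule sum_ind) simp
  also have "{1..m} \<inter> B = B1" using Bm by blast
  finally have "(\<Sum>i\<in>{1..m}. y i) = a - int (card B1)" by (simp add: a_def A1_def)
  then have y4: "int (c * (t - 1)) \<le> (\<Sum>i\<in>{1..m}. y i)"
    using b1d B1 t by (simp add: of_nat_diff algebra_simps)
  have "y \<in> Hf n r m c (t - 1)" unfolding Hf_def using y1 y2 y3 y4 by blast
  then show ?thesis using BM unfolding y_def by blast
qed

lemma Hf0: "x \<in> Hf n r m c 0 \<Longrightarrow> x = (\<lambda>_. 0)"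
proof (rule ext)
  fix i assume x: "x \<in> Hf n r m c 0"
  show "x i = 0"
  proof (cases "i \<in> {1..n}")
    case True
    then have "0 \<le> x i \<and> x i \<le> int 0" using x unfolding Hf_def by blast
    then show ?thesis by simp
  next
    case False then show ?thesis using x unfolding Hf_def by blast
  qed
qed

lemma hf_sub:
  assumes mn: "m \<le> n"
  shows "1 \<le> t \<Longrightarrow> x \<in> Hf n r m c t \<Longrightarrow> x \<in> dilate_lattice_points n (Mb n r m c) t"
proof (induction t arbitrary: x)
  case 0 then show ?case by simp
next
  case (Suc t)
  obtain B where B: "B \<in> Mb n r m c" and y: "(\<lambda>i. x i - ind B i) \<in> Hf n r m c t"
    using peel[OF mn _ Suc.prems(2)] by auto
  have Bs: "B \<subseteq> {1..n}" using B by (simp add: Mb_def)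
  show ?case
  proof (cases "t = 0")
    case True
    then have "(\<lambda>i. x i - ind B i) = (\<lambda>_. 0)" using y Hf0 by blast
    then have "x = ind B" by (metis (no_types) diff_eq_eq add_0 ext fun_cong)
    then show ?thesis using dil_base[OF B Mb_finite Bs] True by simp
  next
    case False
    then have "1 \<le> t" by simp
    then have "(\<lambda>i. x i - ind B i) \<in> dilate_lattice_points n (Mb n r m c) t" using Suc.IH[OF _ y] by blast
    from dil_add[OF this \<open>1 \<le> t\<close> B Mb_finite Bs]
    have "(\<lambda>i. (x i - ind B i) + ind B i) \<in> dilate_lattice_points n (Mb n r m c) (Suc t)" .
    then show ?thesis by simp
  qed
qed

lemma H_eq:
  assumes "m \<le> n" "1 \<le> t"
  shows "dilate_lattice_points n (Mb n r m c) t = Hf n r m c t"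
  using dil_sub[OF assms(1)] hf_sub[OF assms] by blast

definition Lst :: "nat \<Rightarrow> nat \<Rightarrow> nat \<Rightarrow> nat list set" where
  "Lst d t s = {xs. length xs = d \<and> (\<forall>v\<in>set xs. v \<le> t) \<and> sum_list xs = s}"

definition N :: "nat \<Rightarrow> nat \<Rightarrow> nat \<Rightarrow> nat" where
  "N d t s = card (Lst d t s)"

lemma finite_bnd_lists: "finite {xs::nat list. length xs = d \<and> (\<forall>v\<in>set xs. v \<le> t) \<and> P xs}"
  by (rule finite_subset[OF _ finite_lists_length_eq[of "{0..t}" d]]) auto

lemma finite_Lst: "finite (Lst d t s)"
  unfolding Lst_def by (rule finite_bnd_lists)

definition SPL :: "nat \<Rightarrow> nat \<Rightarrow> nat \<Rightarrow> nat \<Rightarrow> nat \<Rightarrow> nat list set" where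
  "SPL m p t a b = {xs. length xs = m + p \<and> (\<forall>v\<in>set xs. v \<le> t) \<and> sum_list (take m xs) = a \<and> sum_list (drop m xs) = b}"

lemma card_SPL: "card (SPL m p t a b) = N m t a * N p t b"
proof -
  have "SPL m p t a b = (\<lambda>(ys, zs). ys @ zs) ` (Lst m t a \<times> Lst p t b)"
  proof (rule set_eqI)
    fix xs
    show "xs \<in> SPL m p t a b \<longleftrightarrow> xs \<in> (\<lambda>(ys, zs). ys @ zs) ` (Lst m t a \<times> Lst p t b)"
    proof
      assume h: "xs \<in> SPL m p t a b"
      then have "(take m xs, drop m xs) \<in> Lst m t a \<times> Lst p t b"
        unfolding SPL_def Lst_def by (auto dest: in_set_takeD in_set_dropD)
      then show "xs \<in> (\<lambda>(ys, zs). ys @ zs) ` (Lst m t a \<times> Lst p t b)"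
        by (intro image_eqI[of _ _ "(take m xs, drop m xs)"]) auto
    next
      assume "xs \<in> (\<lambda>(ys, zs). ys @ zs) ` (Lst m t a \<times> Lst p t b)"
      then obtain ys zs where "xs = ys @ zs" "ys \<in> Lst m t a" "zs \<in> Lst p t b" by auto
      then show "xs \<in> SPL m p t a b" unfolding SPL_def Lst_def by auto
    qed
  qed
  moreover have "inj_on (\<lambda>(ys, zs). ys @ zs) (Lst m t a \<times> Lst p t b)"
    by (auto simp: inj_on_def Lst_def)
  ultimately show ?thesis
    by (simp add: card_image card_cartesian_product N_def)
qed

lemma card_Lcond:
  assumes "m \<le> n"
  shows "card {xs. length xs = n \<and> (\<forall>v\<in>set xs. v \<le> t) \<and> sum_list xs = s \<and> lo \<le> sum_list (take m xs)}
       = (\<Sum>a\<in>{lo..s}. N m t a * N (n - m) t (s - a))"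
proof -
  have "{xs. length xs = n \<and> (\<forall>v\<in>set xs. v \<le> t) \<and> sum_list xs = s \<and> lo \<le> sum_list (take m xs)}
      = (\<Union>a\<in>{lo..s}. SPL m (n - m) t a (s - a))"
  proof (rule set_eqI)
    fix xs :: "nat list"
    have e: "sum_list xs = sum_list (take m xs) + sum_list (drop m xs)"
      by (metis append_take_drop_id sum_list_append)
    show "xs \<in> {xs. length xs = n \<and> (\<forall>v\<in>set xs. v \<le> t) \<and> sum_list xs = s \<and> lo \<le> sum_list (take m xs)}
      \<longleftrightarrow> xs \<in> (\<Union>a\<in>{lo..s}. SPL m (n - m) t a (s - a))"
      using assms e unfolding SPL_def by auto
  qed
  moreover have "card (\<Union>a\<in>{lo..s}. SPL m (n - m) t a (s - a)) = (\<Sum>a\<in>{lo..s}. card (SPL m (n - m) t a (s - a)))"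
    by (rule card_UN_disjoint) (auto simp: SPL_def finite_bnd_lists)
  ultimately show ?thesis by (simp add: card_SPL)
qed

lemma N_conv:
  assumes "m \<le> n"
  shows "N n t s = (\<Sum>a\<in>{0..s}. N m t a * N (n - m) t (s - a))"
proof -
  have "Lst n t s = {xs. length xs = n \<and> (\<forall>v\<in>set xs. v \<le> t) \<and> sum_list xs = s \<and> 0 \<le> sum_list (take m xs)}"
    by (simp add: Lst_def)
  then show ?thesis using card_Lcond[OF assms, of t s 0] by (simp add: N_def)
qed

lemma sum_list_compl: "\<forall>v\<in>set xs. v \<le> t \<Longrightarrow> sum_list (map (\<lambda>v. t - v) xs) = length xs * t - sum_list xs"
proof (induction xs)
  case Nil then show ?case by simp
next
  case (Cons x xs)
  have "sum_list xs \<le> length xs * t" using Cons.prems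
    by (induction xs) auto
  then show ?case using Cons by (simp add: algebra_simps)
qed

lemma sum_list_le: "\<forall>v\<in>set xs. v \<le> t \<Longrightarrow> sum_list xs \<le> length xs * t"
  by (induction xs) auto

lemma N_sym:
  assumes "s \<le> d * t"
  shows "N d t s = N d t (d * t - s)"
proof -
  let ?f = "map (\<lambda>v. t - v)"
  have inj: "inj_on ?f (Lst d t s)"
  proof (rule inj_onI)
    fix xs ys assume "xs \<in> Lst d t s" "ys \<in> Lst d t s" "?f xs = ?f ys"
    then have l: "length xs = length ys" and bx: "\<forall>v\<in>set xs. v \<le> t" and "\<forall>v\<in>set ys. v \<le> t"
      and e: "?f xs = ?f ys" by (auto simp: Lst_def)
    show "xs = ys"
    proof (rule nth_equalityI[OF l])
      fix i assume i: "i < length xs"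
      have "?f xs ! i = ?f ys ! i" using e by simp
      then have "t - xs ! i = t - ys ! i" using i l by simp
      moreover have "xs ! i \<le> t" "ys ! i \<le> t" using i l bx \<open>\<forall>v\<in>set ys. v \<le> t\<close> by (auto simp: nth_mem)
      ultimately show "xs ! i = ys ! i" by simp
    qed
  qed
  have "?f ` Lst d t s = Lst d t (d * t - s)"
  proof (rule set_eqI)
    fix ys
    show "ys \<in> ?f ` Lst d t s \<longleftrightarrow> ys \<in> Lst d t (d * t - s)"
    proof
      assume "ys \<in> ?f ` Lst d t s"
      then obtain xs where xs: "xs \<in> Lst d t s" "ys = ?f xs" by auto
      then show "ys \<in> Lst d t (d * t - s)" using sum_list_compl[of xs t] by (auto simp: Lst_def)
    next
      assume ys: "ys \<in> Lst d t (d * t - s)"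
      have yb: "\<forall>v\<in>set ys. v \<le> t" and ly: "length ys = d" and sy: "sum_list ys = d * t - s"
        using ys by (auto simp: Lst_def)
      have "?f (?f ys) = ys" using yb by (induction ys) auto
      moreover have "?f ys \<in> Lst d t s"
        using sum_list_compl[OF yb] yb ly sy assms by (auto simp: Lst_def)
      ultimately show "ys \<in> ?f ` Lst d t s" by (metis image_eqI)
    qed
  qed
  then show ?thesis using card_image[OF inj] by (simp add: N_def)
qed

lemma N_one: "N 1 t a = (if a \<le> t then 1 else 0)"
proof -
  have "Lst 1 t a = (if a \<le> t then {[a]} else {})"
    by (auto simp: Lst_def length_Suc_conv)
  then show ?thesis by (simp add: N_def)
qed

lemma N_zero: "N 0 t s = (if s = 0 then 1 else 0)"
proof -
  have "Lst 0 t s = (if s = 0 then {[]} else {})" by (auto simp: Lst_def)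
  then show ?thesis by (simp add: N_def)
qed

definition Phi :: "nat \<Rightarrow> nat list \<Rightarrow> nat \<Rightarrow> int" where
  "Phi n xs = (\<lambda>i. if 1 \<le> i \<and> i \<le> n then int (xs ! (i - 1)) else 0)"

lemma Phi_sum: "m \<le> n \<Longrightarrow> m \<le> length xs \<Longrightarrow> (\<Sum>i\<in>{1..m}. Phi n xs i) = int (sum_list (take m xs))"
proof (induction m)
  case 0 then show ?case by simp
next
  case (Suc m)
  have "{1..Suc m} = insert (Suc m) {1..m}" by auto
  then have "(\<Sum>i\<in>{1..Suc m}. Phi n xs i) = Phi n xs (Suc m) + (\<Sum>i\<in>{1..m}. Phi n xs i)" by simp
  also have "\<dots> = int (xs ! m) + int (sum_list (take m xs))" using Suc by (simp add: Phi_def)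
  also have "\<dots> = int (sum_list (take (Suc m) xs))" using Suc by (simp add: take_Suc_conv_app_nth)
  finally show ?case .
qed

definition LH :: "nat \<Rightarrow> nat \<Rightarrow> nat \<Rightarrow> nat \<Rightarrow> nat \<Rightarrow> nat list set" where
  "LH n r m c t = {xs. length xs = n \<and> (\<forall>v\<in>set xs. v \<le> t) \<and> sum_list xs = r * t \<and> c * t \<le> sum_list (take m xs)}"

lemma Hf_card:
  assumes mn: "m \<le> n"
  shows "card (Hf n r m c t) = card (LH n r m c t)"
proof -
  have inj: "inj_on (Phi n) (LH n r m c t)"
  proof (rule inj_onI)
    fix xs ys assume h: "xs \<in> LH n r m c t" "ys \<in> LH n r m c t" "Phi n xs = Phi n ys"
    show "xs = ys"
    proof (rule nth_equalityI)
      show "length xs = length ys" using h by (simp add: LH_def)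
      fix i assume "i < length xs"
      then have "Phi n xs (Suc i) = Phi n ys (Suc i)" "Suc i \<le> n" using h by (auto simp: LH_def)
      then show "xs ! i = ys ! i" by (simp add: Phi_def)
    qed
  qed
  have "Phi n ` LH n r m c t = Hf n r m c t"
  proof (rule set_eqI)
    fix x
    show "x \<in> Phi n ` LH n r m c t \<longleftrightarrow> x \<in> Hf n r m c t"
    proof
      assume "x \<in> Phi n ` LH n r m c t"
      then obtain xs where xs: "xs \<in> LH n r m c t" "x = Phi n xs" by auto
      have l: "length xs = n" and b: "\<forall>v\<in>set xs. v \<le> t" and s: "sum_list xs = r * t"
        and c: "c * t \<le> sum_list (take m xs)" using xs by (auto simp: LH_def)
      have "\<forall>i. i \<notin> {1..n} \<longrightarrow> x i = 0" using xs by (auto simp: Phi_def)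
      moreover have "\<forall>i\<in>{1..n}. 0 \<le> x i \<and> x i \<le> int t"
        using xs l b by (auto simp: Phi_def)
      moreover have "(\<Sum>i\<in>{1..n}. x i) = int (r * t)" using Phi_sum[of n n xs] l s xs by simp
      moreover have "int (c * t) \<le> (\<Sum>i\<in>{1..m}. x i)"
      proof -
        have "int (c * t) \<le> int (sum_list (take m xs))" using c by (simp only: of_nat_le_iff)
        then show ?thesis using Phi_sum[of m n xs] mn l xs(2) by simp
      qed
      ultimately show "x \<in> Hf n r m c t" unfolding Hf_def by blast
    next
      assume x: "x \<in> Hf n r m c t"
      have z: "\<forall>i. i \<notin> {1..n} \<longrightarrow> x i = 0" and bd: "\<forall>i\<in>{1..n}. 0 \<le> x i \<and> x i \<le> int t"
        and sn: "(\<Sum>i\<in>{1..n}. x i) = int (r * t)" and sm: "int (c * t) \<le> (\<Sum>i\<in>{1..m}. x i)"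
        using x by (auto simp: Hf_def)
      define xs where "xs = map (\<lambda>i. nat (x (Suc i))) [0..<n]"
      have l: "length xs = n" by (simp add: xs_def)
      have px: "Phi n xs = x"
      proof (rule ext)
        fix i
        show "Phi n xs i = x i"
        proof (cases "1 \<le> i \<and> i \<le> n")
          case True
          then have x0: "0 \<le> x i" using bd by auto
          obtain j where j: "i = Suc j" "j < n" using True by (cases i) auto
          then show ?thesis using x0 by (simp add: Phi_def xs_def)
        next
          case False then show ?thesis using z by (auto simp: Phi_def)
        qed
      qed
      have b: "\<forall>v\<in>set xs. v \<le> t"
      proof
        fix v assume "v \<in> set xs"
        then obtain i where i: "i < n" "v = nat (x (Suc i))" by (auto simp: xs_def)
        then have "Suc i \<in> {1..n}" by simp
        then have "x (Suc i) \<le> int t" using bd by blast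
        then show "v \<le> t" using i by simp
      qed
      have "int (sum_list xs) = int (r * t)" using Phi_sum[of n n xs] l sn px by simp
      moreover have "int (c * t) \<le> int (sum_list (take m xs))" using Phi_sum[of m n xs] l sm px mn by simp
      ultimately have "sum_list xs = r * t" "c * t \<le> sum_list (take m xs)"
        by (simp_all only: of_nat_eq_iff of_nat_le_iff)
      then have "xs \<in> LH n r m c t" using l b by (simp add: LH_def)
      then show "x \<in> Phi n ` LH n r m c t" using px by blast
    qed
  qed
  then show ?thesis using card_image[OF inj] by simp
qed

lemma Hf_count:
  assumes "m \<le> n"
  shows "card (Hf n r m c t) = (\<Sum>a\<in>{c * t..r * t}. N m t a * N (n - m) t (r * t - a))"
  using Hf_card[OF assms] card_Lcond[OF assms] unfolding LH_def by simp

fun W :: "nat \<Rightarrow> int \<Rightarrow> int" where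
  "W 0 s = (if s = 0 then 1 else 0)"
| "W (Suc d) s = (\<Sum>z\<in>{0..s}. W d z)"

lemma W_neg: "s < 0 \<Longrightarrow> W d s = 0"
  by (cases d) auto

lemma W_rec: "W (Suc d) s = W (Suc d) (s - 1) + W d s"
proof (cases "s < 0")
  case True then show ?thesis by (simp add: W_neg)
next
  case False
  then have "{0..s} = insert s {0..s - 1}" by auto
  then show ?thesis by simp
qed

lemma W_diff: "W (Suc d) s - W (Suc d) (s - int (Suc t)) = (\<Sum>v\<in>{0..t}. W d (s - int v))"
proof (induction t)
  case 0 then show ?case using W_rec[of d s] by simp
next
  case (Suc t)
  define u where "u = s - int (Suc t)"
  have e: "s - int (Suc (Suc t)) = u - 1" by (simp add: u_def)
  have r: "W (Suc d) u = W (Suc d) (u - 1) + W d u" by (rule W_rec)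
  have sm: "(\<Sum>v\<in>{0..Suc t}. W d (s - int v)) = (\<Sum>v\<in>{0..t}. W d (s - int v)) + W d u"
    by (simp add: u_def)
  have ih: "W (Suc d) s - W (Suc d) u = (\<Sum>v\<in>{0..t}. W d (s - int v))" using Suc.IH by (simp add: u_def)
  show ?case unfolding e using sm r ih by linarith
qed

definition Nz :: "nat \<Rightarrow> nat \<Rightarrow> int \<Rightarrow> int" where
  "Nz d t s = (if s < 0 then 0 else int (N d t (nat s)))"

lemma Nz_rec: "Nz (Suc d) t s = (\<Sum>v\<in>{0..t}. Nz d t (s - int v))"
proof (cases "s < 0")
  case True then show ?thesis by (simp add: Nz_def)
next
  case False
  then obtain s' where s: "s = int s'" by (metis nonneg_int_cases not_less)
  have "N (Suc d) t s' = (\<Sum>a\<in>{0..s'}. N 1 t a * N (Suc d - 1) t (s' - a))"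
    using N_conv[of 1 "Suc d" t s'] by simp
  then have "int (N (Suc d) t s') = (\<Sum>a\<in>{0..s'}. int (N 1 t a) * int (N d t (s' - a)))" by simp
  also have "\<dots> = (\<Sum>a\<in>{0..s'}. if a \<in> {0..t} then int (N d t (s' - a)) else 0)"
    using N_one[of t] by (intro sum.cong) auto
  also have "\<dots> = (\<Sum>a\<in>{0..s'} \<inter> {0..t}. int (N d t (s' - a)))"
    by (rule sum.inter_restrict[symmetric]) simp
  also have "\<dots> = (\<Sum>a\<in>{0..t} \<inter> {0..s'}. int (N d t (s' - a)))"
    by (simp only: Int_commute)
  also have "\<dots> = (\<Sum>v\<in>{0..t}. if v \<in> {0..s'} then int (N d t (s' - v)) else 0)"
    by (rule sum.inter_restrict) simp
  also have "\<dots> = (\<Sum>v\<in>{0..t}. Nz d t (s - int v))"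
    by (rule sum.cong) (auto simp: Nz_def s nat_diff_distrib)
  finally show ?thesis using s by (simp add: Nz_def)
qed

lemma pascal_sum:
  fixes g :: "nat \<Rightarrow> int"
  shows "(\<Sum>j\<le>d. (-1)^j * int (d choose j) * (g j - g (Suc j)))
       = (\<Sum>j\<le>Suc d. (-1)^j * int (Suc d choose j) * g j)"
proof -
  define h where "h = (\<lambda>j. (-1::int)^j * int (d choose j) * g j)"
  have "(\<Sum>j\<le>d. h j) = (\<Sum>j\<le>Suc d. h j)" by (simp add: h_def)
  also have "\<dots> = h 0 + (\<Sum>j\<le>d. h (Suc j))" by (rule sum.atMost_Suc_shift)
  finally have e1: "(\<Sum>j\<le>d. h j) = g 0 - (\<Sum>j\<le>d. (-1)^j * int (d choose Suc j) * g (Suc j))"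
    by (simp add: h_def sum_negf)
  have "(\<Sum>j\<le>Suc d. (-1)^j * int (Suc d choose j) * g j)
      = g 0 + (\<Sum>j\<le>d. (-1)^(Suc j) * int (Suc d choose Suc j) * g (Suc j))"
    by (subst sum.atMost_Suc_shift) simp
  also have "(\<Sum>j\<le>d. (-1)^(Suc j) * int (Suc d choose Suc j) * g (Suc j))
      = (\<Sum>j\<le>d. - ((-1)^j * int (d choose Suc j) * g (Suc j)) - (-1)^j * int (d choose j) * g (Suc j))"
    by (rule sum.cong) (auto simp: algebra_simps)
  also have "\<dots> = - (\<Sum>j\<le>d. (-1)^j * int (d choose Suc j) * g (Suc j)) - (\<Sum>j\<le>d. (-1)^j * int (d choose j) * g (Suc j))"
    by (simp add: sum_subtractf sum_negf)
  finally have e2: "(\<Sum>j\<le>Suc d. (-1)^j * int (Suc d choose j) * g j) = (\<Sum>j\<le>d. h j) - (\<Sum>j\<le>d. (-1)^j * int (d choose j) * g (Suc j))"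
    using e1 by linarith
  have "(\<Sum>j\<le>d. (-1)^j * int (d choose j) * (g j - g (Suc j))) = (\<Sum>j\<le>d. h j) - (\<Sum>j\<le>d. (-1)^j * int (d choose j) * g (Suc j))"
    by (simp add: h_def sum_subtractf[symmetric] right_diff_distrib)
  then show ?thesis using e2 by simp
qed

lemma IE: "Nz d t s = (\<Sum>j\<le>d. (-1)^j * int (d choose j) * W d (s - int j * int (Suc t)))"
proof (induction d arbitrary: s)
  case 0 then show ?case by (simp add: Nz_def N_zero)
next
  case (Suc d)
  have "Nz (Suc d) t s = (\<Sum>v\<in>{0..t}. \<Sum>j\<le>d. (-1)^j * int (d choose j) * W d (s - int v - int j * int (Suc t)))"
    by (simp add: Nz_rec Suc.IH)
  also have "\<dots> = (\<Sum>j\<le>d. (-1)^j * int (d choose j) * (\<Sum>v\<in>{0..t}. W d (s - int j * int (Suc t) - int v)))"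
    by (subst sum.swap) (simp add: sum_distrib_left algebra_simps)
  also have "\<dots> = (\<Sum>j\<le>d. (-1)^j * int (d choose j) * (W (Suc d) (s - int j * int (Suc t)) - W (Suc d) (s - int (Suc j) * int (Suc t))))"
  proof (rule sum.cong[OF refl])
    fix j
    have e: "s - int (Suc j) * int (Suc t) = (s - int j * int (Suc t)) - int (Suc t)" by (simp add: algebra_simps)
    show "(-1)^j * int (d choose j) * (\<Sum>v\<in>{0..t}. W d (s - int j * int (Suc t) - int v))
      = (-1)^j * int (d choose j) * (W (Suc d) (s - int j * int (Suc t)) - W (Suc d) (s - int (Suc j) * int (Suc t)))"
      unfolding e W_diff by (rule refl)
  qed
  also have "\<dots> = (\<Sum>j\<le>Suc d. (-1)^j * int (Suc d choose j) * W (Suc d) (s - int j * int (Suc t)))"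
    by (rule pascal_sum[where g = "\<lambda>j. W (Suc d) (s - int j * int (Suc t))"])
  finally show ?case .
qed

definition pb :: "nat \<Rightarrow> real \<Rightarrow> real" where
  "pb d y = (\<Prod>i<d. y + real (Suc i)) / fact d"

lemma pb_rec: "pb (Suc d) y = pb (Suc d) (y - 1) + pb d y"
proof -
  define P where "P = (\<Prod>i<d. y + real (Suc i))"
  have a: "pb (Suc d) y = P * (y + real (Suc d)) / fact (Suc d)"
    by (simp add: pb_def P_def)
  have "(\<Prod>i<Suc d. y - 1 + real (Suc i)) = (y - 1 + 1) * (\<Prod>i<d. y - 1 + real (Suc (Suc i)))"
    by (subst prod.lessThan_Suc_shift) simp
  also have "(\<Prod>i<d. y - 1 + real (Suc (Suc i))) = P" unfolding P_def by (rule prod.cong) auto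
  finally have b: "pb (Suc d) (y - 1) = y * P / fact (Suc d)" by (simp add: pb_def)
  have c: "pb d y = P / fact d" by (simp add: pb_def P_def)
  have f: "fact (Suc d) = (real d + 1) * (fact d :: real)" by simp
  have g: "P * (real d + 1) / fact (Suc d) = P / fact d" unfolding f by simp
  have "P * (y + real (Suc d)) / fact (Suc d) = y * P / fact (Suc d) + P * (real d + 1) / fact (Suc d)"
    by (simp add: add_divide_distrib[symmetric] algebra_simps)
  then show ?thesis unfolding a b c g .
qed

lemma pb_zero: "pb (Suc d) (- (real d + 1)) = 0"
  unfolding pb_def by (simp add: prod.lessThan_Suc)

lemma W_pb: "- int d \<le> y \<Longrightarrow> real_of_int (W (Suc d) y) = pb d (real_of_int y)"
proof (induction d arbitrary: y)
  case 0
  have "W (Suc 0) y = (\<Sum>z\<in>{0..y}. if z = 0 then 1 else 0)" by simp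
  also have "\<dots> = 1" using 0 by (simp add: sum.delta)
  finally show ?case by (simp add: pb_def)
next
  case (Suc d)
  note IHd = Suc.IH
  have k: "real_of_int (W (Suc (Suc d)) (int k - int d - 1)) = pb (Suc d) (real_of_int (int k - int d - 1))" for k
  proof (induction k)
    case 0
    have "W (Suc (Suc d)) (int 0 - int d - 1) = 0" by (rule W_neg) simp
    moreover have "pb (Suc d) (real_of_int (int 0 - int d - 1)) = 0" using pb_zero[of d] by simp
    ultimately show ?case by simp
  next
    case (Suc k)
    have "W (Suc (Suc d)) (int (Suc k) - int d - 1) = W (Suc (Suc d)) (int k - int d - 1) + W (Suc d) (int k - int d)"
      using W_rec[of "Suc d" "int (Suc k) - int d - 1"] by simp
    moreover have "real_of_int (W (Suc d) (int k - int d)) = pb d (real_of_int (int k - int d))"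
      using IHd[of "int k - int d"] by simp
    moreover have "pb (Suc d) (real_of_int (int (Suc k) - int d - 1)) = pb (Suc d) (real_of_int (int k - int d - 1)) + pb d (real_of_int (int k - int d))"
      using pb_rec[of d "real_of_int (int (Suc k) - int d - 1)"] by simp
    ultimately show ?case using Suc.IH by (simp del: W.simps)
  qed
  define K where "K = nat (y + int d + 1)"
  have eq: "int K - int d - 1 = y" using Suc.prems by (simp add: K_def)
  show ?case using k[of K] unfolding eq .
qed

definition ispoly :: "(real \<Rightarrow> real) \<Rightarrow> bool" where
  "ispoly f \<longleftrightarrow> (\<exists>p. \<forall>x. f x = poly p x)"

definition natpoly :: "(nat \<Rightarrow> real) \<Rightarrow> bool" where
  "natpoly g \<longleftrightarrow> (\<exists>p. \<forall>s. g s = poly p (real s))"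

lemma ispoly_const: "ispoly (\<lambda>_. c)"
  unfolding ispoly_def by (rule exI[of _ "[:c:]"]) simp

lemma ispoly_id: "ispoly (\<lambda>x. x)"
  unfolding ispoly_def by (rule exI[of _ "[:0, 1:]"]) simp

lemma ispoly_add: "ispoly f \<Longrightarrow> ispoly g \<Longrightarrow> ispoly (\<lambda>x. f x + g x)"
  unfolding ispoly_def by (metis poly_add)

lemma ispoly_diff: "ispoly f \<Longrightarrow> ispoly g \<Longrightarrow> ispoly (\<lambda>x. f x - g x)"
  unfolding ispoly_def by (metis poly_diff)

lemma ispoly_mult: "ispoly f \<Longrightarrow> ispoly g \<Longrightarrow> ispoly (\<lambda>x. f x * g x)"
  unfolding ispoly_def by (metis poly_mult)

lemma ispoly_pow: "ispoly f \<Longrightarrow> ispoly (\<lambda>x. f x ^ n)"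
  by (induction n) (auto intro: ispoly_mult ispoly_const)

lemma ispoly_prod: "(\<And>i. i \<in> A \<Longrightarrow> ispoly (f i)) \<Longrightarrow> ispoly (\<lambda>x. \<Prod>i\<in>A. f i x)"
proof (induction A rule: infinite_finite_induct)
  case (infinite A) then show ?case by (simp add: ispoly_const)
next
  case empty then show ?case by (simp add: ispoly_const)
next
  case (insert a A) then show ?case by (simp add: ispoly_mult)
qed

lemma ispoly_sum: "(\<And>i. i \<in> A \<Longrightarrow> ispoly (f i)) \<Longrightarrow> ispoly (\<lambda>x. \<Sum>i\<in>A. f i x)"
proof (induction A rule: infinite_finite_induct)
  case (infinite A) then show ?case by (simp add: ispoly_const)
next
  case empty then show ?case by (simp add: ispoly_const)
next
  case (insert a A) then show ?case by (simp add: ispoly_add)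
qed

lemma ispoly_lin: "ispoly f \<Longrightarrow> ispoly (\<lambda>x. f (a * x + b))"
proof -
  assume "ispoly f"
  then obtain p where p: "\<forall>x. f x = poly p x" by (auto simp: ispoly_def)
  have "\<forall>x. f (a * x + b) = poly (pcompose p [:b, a:]) x" using p by (simp add: poly_pcompose algebra_simps)
  then show ?thesis by (auto simp: ispoly_def)
qed

lemma natpoly_of: "ispoly f \<Longrightarrow> natpoly (\<lambda>s. f (real s))"
  unfolding ispoly_def natpoly_def by blast

lemma natpoly_add: "natpoly f \<Longrightarrow> natpoly g \<Longrightarrow> natpoly (\<lambda>x. f x + g x)"
  unfolding natpoly_def by (metis poly_add)

lemma natpoly_diff: "natpoly f \<Longrightarrow> natpoly g \<Longrightarrow> natpoly (\<lambda>x. f x - g x)"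
  unfolding natpoly_def by (metis poly_diff)

lemma natpoly_cmult: "natpoly f \<Longrightarrow> natpoly (\<lambda>x. c * f x)"
  unfolding natpoly_def by (metis poly_smult)

lemma natpoly_sum: "(\<And>i. i \<in> A \<Longrightarrow> natpoly (f i)) \<Longrightarrow> natpoly (\<lambda>x. \<Sum>i\<in>A. f i x)"
proof (induction A rule: infinite_finite_induct)
  case (infinite A) then show ?case using natpoly_of[OF ispoly_const[of 0]] by simp
next
  case empty then show ?case using natpoly_of[OF ispoly_const[of 0]] by simp
next
  case (insert a A) then show ?case by (simp add: natpoly_add)
qed

lemma natpoly_cong: "natpoly f \<Longrightarrow> (\<And>s. g s = f s) \<Longrightarrow> natpoly g"
  unfolding natpoly_def by simp

lemma binom_step:
  fixes x :: real
  shows "(x + 1) ^ Suc d - x ^ Suc d = (\<Sum>j\<le>d. real (Suc d choose j) * x ^ j)"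
proof -
  have "(x + 1) ^ Suc d = (\<Sum>j\<le>Suc d. real (Suc d choose j) * x ^ j * 1 ^ (Suc d - j))"
    by (rule binomial_ring)
  also have "\<dots> = (\<Sum>j\<le>d. real (Suc d choose j) * x ^ j) + x ^ Suc d"
    by (simp add: sum.atMost_Suc)
  finally show ?thesis by simp
qed

lemma psum_mono: "natpoly (\<lambda>s. \<Sum>a\<le>s. real a ^ d)"
proof (induction d rule: less_induct)
  case (less d)
  define S where "S = (\<lambda>j s. \<Sum>a\<le>s. real a ^ j)"
  have key: "(real s + 1) ^ Suc d = (\<Sum>j\<le>d. real (Suc d choose j) * S j s)" for s
  proof -
    have "(real s + 1) ^ Suc d = (\<Sum>a<Suc s. real (Suc a) ^ Suc d - real a ^ Suc d)"
      by (subst sum_lessThan_telescope) (simp add: add.commute)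
    also have "\<dots> = (\<Sum>a\<le>s. \<Sum>j\<le>d. real (Suc d choose j) * real a ^ j)"
      by (simp add: lessThan_Suc_atMost binom_step[symmetric] add.commute)
    also have "\<dots> = (\<Sum>j\<le>d. real (Suc d choose j) * S j s)"
      by (subst sum.swap) (simp add: S_def sum_distrib_left)
    finally show ?thesis .
  qed
  have eq: "S d s = ((real s + 1) ^ Suc d - (\<Sum>j<d. real (Suc d choose j) * S j s)) / real (Suc d)" for s
  proof -
    have "(\<Sum>j\<le>d. real (Suc d choose j) * S j s) = (\<Sum>j<d. real (Suc d choose j) * S j s) + real (Suc d) * S d s"
      by (simp add: lessThan_Suc_atMost[symmetric])
    then have "real (Suc d) * S d s = (real s + 1) ^ Suc d - (\<Sum>j<d. real (Suc d choose j) * S j s)"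
      using key[of s] by simp
    then show ?thesis by (simp add: field_simps)
  qed
  have n1: "natpoly (\<lambda>s. (real s + 1) ^ Suc d)"
    by (rule natpoly_of[where f="\<lambda>x. (x + 1) ^ Suc d"]) (intro ispoly_pow ispoly_add ispoly_id ispoly_const)
  have n2: "natpoly (\<lambda>s. \<Sum>j<d. real (Suc d choose j) * S j s)"
    by (intro natpoly_sum natpoly_cmult) (simp add: S_def less.IH)
  have "natpoly (\<lambda>s. (1 / real (Suc d)) * ((real s + 1) ^ Suc d - (\<Sum>j<d. real (Suc d choose j) * S j s)))"
    by (intro natpoly_cmult natpoly_diff n1 n2)
  then have "natpoly (S d)" by (rule natpoly_cong) (simp add: eq)
  then show ?case by (simp add: S_def)
qed

lemma psum: "ispoly f \<Longrightarrow> natpoly (\<lambda>s. \<Sum>a\<le>s. f (real a))"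
proof -
  assume "ispoly f"
  then obtain q where q: "\<forall>x. f x = poly q x" by (auto simp: ispoly_def)
  have "(\<Sum>a\<le>s. f (real a)) = (\<Sum>i\<le>degree q. coeff q i * (\<Sum>a\<le>s. real a ^ i))" for s
    by (simp add: q poly_altdef sum_distrib_left) (rule sum.swap)
  moreover have "natpoly (\<lambda>s. \<Sum>i\<le>degree q. coeff q i * (\<Sum>a\<le>s. real a ^ i))"
    by (intro natpoly_sum natpoly_cmult psum_mono)
  ultimately show ?thesis by (rule natpoly_cong[rotated]) 
qed

lemma pb_ispoly: "ispoly (pb d)"
proof -
  have "ispoly (\<lambda>y. (\<Prod>i<d. y + real (Suc i)) * (1 / fact d))"
    by (intro ispoly_mult ispoly_prod ispoly_add ispoly_id ispoly_const)
  then show ?thesis unfolding pb_def by simp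
qed

lemma ehr_eq:
  assumes "\<forall>t\<ge>1. poly p (real t) = real (card (dilate_lattice_points n B t))"
  shows "ehrhart_poly n B = p"
  unfolding ehrhart_poly_def
proof (rule the_equality)
  show "\<forall>t\<ge>1. poly p (real t) = real (card (dilate_lattice_points n B t))" by fact
next
  fix q assume q: "\<forall>t\<ge>1. poly q (real t) = real (card (dilate_lattice_points n B t))"
  show "q = p"
  proof (rule ccontr)
    assume "q \<noteq> p"
    then have "q - p \<noteq> 0" by simp
    then have fin: "finite {x. poly (q - p) x = 0}" by (rule poly_roots_finite)
    have eq: "poly q (real (Suc t)) = poly p (real (Suc t))" for t
      using q[rule_format, of "Suc t"] assms[rule_format, of "Suc t"] by simp
    have "range (\<lambda>t. real (Suc t)) \<subseteq> {x. poly (q - p) x = 0}"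
    proof
      fix x assume "x \<in> range (\<lambda>t. real (Suc t))"
      then obtain t where x: "x = real (Suc t)" by auto
      have "poly (q - p) x = 0" unfolding x poly_diff eq by simp
      then show "x \<in> {x. poly (q - p) x = 0}" by simp
    qed
    then have "finite (range (\<lambda>t. real (Suc t)))" using fin finite_subset by blast
    moreover have "inj (\<lambda>t. real (Suc t))" by (auto simp: inj_on_def)
    ultimately have "finite (UNIV :: nat set)" by (rule finite_imageD)
    then show False by simp
  qed
qed

lemma sum_only0:
  fixes f :: "nat \<Rightarrow> 'a::comm_monoid_add"
  assumes "\<forall>j\<in>{..d}. j \<noteq> 0 \<longrightarrow> f j = 0"
  shows "(\<Sum>j\<le>d. f j) = f 0"
proof -
  have "(\<Sum>j\<le>d. f j) = (\<Sum>j\<in>{0}. f j)"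
    using assms by (intro sum.mono_neutral_right) auto
  then show ?thesis by simp
qed

lemma Nsmall:
  assumes "1 \<le> d" "a \<le> t"
  shows "real (N d t a) = pb (d - 1) (real a)"
proof -
  have "Nz d t (int a) = (\<Sum>j\<le>d. (-1)^j * int (d choose j) * W d (int a - int j * int (Suc t)))"
    by (rule IE)
  also have "\<dots> = W d (int a)"
  proof -
    have "\<forall>j\<in>{..d}. j \<noteq> 0 \<longrightarrow> (-1)^j * int (d choose j) * W d (int a - int j * int (Suc t)) = 0"
    proof (intro ballI impI)
      fix j :: nat assume "j \<noteq> 0"
      then have h1: "int (Suc t) \<le> int j * int (Suc t)" by simp
      have h2: "int a < int (Suc t)" using assms by simp
      have "int a - int j * int (Suc t) < 0" using h1 h2 by linarith
      then show "(-1)^j * int (d choose j) * W d (int a - int j * int (Suc t)) = 0" by (simp add: W_neg)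
    qed
    then show ?thesis by (subst sum_only0) simp_all
  qed
  finally have "int (N d t a) = W (Suc (d - 1)) (int a)" using assms by (simp add: Nz_def)
  then have "real_of_int (int (N d t a)) = real_of_int (W (Suc (d - 1)) (int a))" by (rule arg_cong)
  then have "real (N d t a) = real_of_int (W (Suc (d - 1)) (int a))" by simp
  also have "\<dots> = pb (d - 1) (real a)" by (subst W_pb) simp_all
  finally show ?thesis .
qed

lemma U_count:
  assumes "2 \<le> k" "k + 2 \<le> n"
  shows "real (N n t (k * t)) = (\<Sum>j\<le>k. (-1)^j * real (n choose j) * pb (n - 1) ((real k - real j) * real t + (- real j)))"
proof -
  have nz: "Nz n t (int m) = int (N n t m)" for m by (simp add: Nz_def)
  have "int (N n t (k * t)) = Nz n t (int (k * t))" by (rule nz[symmetric])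
  also have "Nz n t (int (k * t)) = (\<Sum>j\<le>n. (-1)^j * int (n choose j) * W n (int (k * t) - int j * int (Suc t)))"
    by (rule IE)
  also have "\<dots> = (\<Sum>j\<le>k. (-1)^j * int (n choose j) * W n (int (k * t) - int j * int (Suc t)))"
  proof (rule sum.mono_neutral_right)
    show "\<forall>j\<in>{..n} - {..k}. (-1)^j * int (n choose j) * W n (int (k * t) - int j * int (Suc t)) = 0"
    proof
      fix j assume "j \<in> {..n} - {..k}"
      then have j: "k < j" by auto
      have "int k * int t \<le> int j * int t" using j by (simp add: mult_right_mono)
      then have "int (k * t) - int j * int (Suc t) < 0" using j by (simp add: algebra_simps)
      then show "(-1)^j * int (n choose j) * W n (int (k * t) - int j * int (Suc t)) = 0" by (simp add: W_neg)
    qed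
  qed (use assms in auto)
  finally have e: "int (N n t (k * t)) = (\<Sum>j\<le>k. (-1)^j * int (n choose j) * W n (int (k * t) - int j * int (Suc t)))" .
  have "real (N n t (k * t)) = real_of_int (\<Sum>j\<le>k. (-1)^j * int (n choose j) * W n (int (k * t) - int j * int (Suc t)))"
    using arg_cong[OF e, of real_of_int] by simp
  also have "\<dots> = (\<Sum>j\<le>k. (-1)^j * real (n choose j) * real_of_int (W n (int (k * t) - int j * int (Suc t))))"
    by simp
  also have "\<dots> = (\<Sum>j\<le>k. (-1)^j * real (n choose j) * pb (n - 1) ((real k - real j) * real t + (- real j)))"
  proof (rule sum.cong[OF refl])
    fix j assume "j \<in> {..k}"
    then have j: "j \<le> k" by simp
    have nn: "n = Suc (n - 1)" using assms by simp
    have "int j * int t \<le> int k * int t" using j by (simp add: mult_right_mono)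
    then have ge: "- int (n - 1) \<le> int (k * t) - int j * int (Suc t)" using j assms by (simp add: algebra_simps)
    have "real_of_int (W n (int (k * t) - int j * int (Suc t))) = pb (n - 1) (real_of_int (int (k * t) - int j * int (Suc t)))"
      using W_pb[OF ge] unfolding nn[symmetric] .
    also have "real_of_int (int (k * t) - int j * int (Suc t)) = (real k - real j) * real t + (- real j)"
      by (simp add: algebra_simps)
    finally show "(-1)^j * real (n choose j) * real_of_int (W n (int (k * t) - int j * int (Suc t)))
      = (-1)^j * real (n choose j) * pb (n - 1) ((real k - real j) * real t + (- real j))" by simp
  qed
  finally show ?thesis .
qed

lemma Sp_count:
  assumes "1 \<le> k" "k + 2 \<le> n" "1 \<le> t"
  shows "real (card (dilate_lattice_points n (Sp_bases k n) t))
       = real (N n t (k * t)) - (\<Sum>a<t. pb (k - 1) (real a) * pb (n - k - 1) (real a))"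
proof -
  define R where "R = (n - k) * t"
  have kn: "k \<le> n" using assms by simp
  have tR: "t \<le> R" using assms by (simp add: R_def)
  have c1: "card (dilate_lattice_points n (Sp_bases k n) t) = (\<Sum>a\<in>{t..R}. N k t a * N (n - k) t (R - a))"
    using assms by (simp add: Sp_bases_eq H_eq Hf_count R_def)
  have "N n t R = (\<Sum>a\<in>{0..R}. N k t a * N (n - k) t (R - a))" by (rule N_conv[OF kn])
  also have "{0..R} = {..<t} \<union> {t..R}" using tR by auto
  also have "(\<Sum>a\<in>{..<t} \<union> {t..R}. N k t a * N (n - k) t (R - a))
      = (\<Sum>a<t. N k t a * N (n - k) t (R - a)) + (\<Sum>a\<in>{t..R}. N k t a * N (n - k) t (R - a))"
    by (rule sum.union_disjoint) auto
  finally have e1: "N n t R = (\<Sum>a<t. N k t a * N (n - k) t (R - a)) + card (dilate_lattice_points n (Sp_bases k n) t)"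
    using c1 by simp
  have e2: "real (\<Sum>a<t. N k t a * N (n - k) t (R - a)) = (\<Sum>a<t. pb (k - 1) (real a) * pb (n - k - 1) (real a))"
  proof -
    have "real (\<Sum>a<t. N k t a * N (n - k) t (R - a)) = (\<Sum>a<t. real (N k t a) * real (N (n - k) t (R - a)))" by simp
    also have "\<dots> = (\<Sum>a<t. pb (k - 1) (real a) * pb (n - k - 1) (real a))"
    proof (rule sum.cong[OF refl])
      fix a assume "a \<in> {..<t}"
      then have a: "a < t" by simp
      have s1: "N (n - k) t (R - a) = N (n - k) t ((n - k) * t - (R - a))"
        by (rule N_sym) (simp add: R_def)
      have aR: "a \<le> R" using a tR by simp
      have s2: "(n - k) * t - (R - a) = a" by (metis R_def diff_diff_cancel aR)
      have "N (n - k) t (R - a) = N (n - k) t a" using s1 unfolding s2 .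
      then show "real (N k t a) * real (N (n - k) t (R - a)) = pb (k - 1) (real a) * pb (n - k - 1) (real a)"
        using Nsmall[of k a t] Nsmall[of "n - k" a t] assms a by simp
    qed
    finally show ?thesis .
  qed
  have e3: "N n t R = N n t (k * t)"
  proof -
    have "N n t R = N n t (n * t - R)" by (rule N_sym) (simp add: R_def mult_right_mono)
    also have "n * t - R = k * t" using kn by (simp add: R_def diff_mult_distrib)
    finally show ?thesis .
  qed
  have "real (N n t (k * t)) = real (\<Sum>a<t. N k t a * N (n - k) t (R - a)) + real (card (dilate_lattice_points n (Sp_bases k n) t))"
    using e1 e3 by simp
  then show ?thesis using e2 by linarith
qed

lemma U_count2:
  assumes "2 \<le> k" "k + 2 \<le> n" "1 \<le> t"
  shows "real (card (dilate_lattice_points n (U_bases k n) t)) = real (N n t (k * t))"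
proof -
  have kn: "k \<le> n" using assms by simp
  have "dilate_lattice_points n (U_bases k n) t = Hf n k 0 0 t"
    unfolding U_bases_eq[OF kn] using assms by (intro H_eq) auto
  then have "card (dilate_lattice_points n (U_bases k n) t) = (\<Sum>a\<in>{0 * t..k * t}. N 0 t a * N (n - 0) t (k * t - a))"
    by (simp only: Hf_count[of 0 n])
  then have "card (dilate_lattice_points n (U_bases k n) t) = (\<Sum>a\<in>{0..k * t}. N 0 t a * N n t (k * t - a))"
    by simp
  also have "\<dots> = (\<Sum>a\<in>{0}. N 0 t a * N n t (k * t - a))"
    by (rule sum.mono_neutral_right) (auto simp: N_zero)
  finally show ?thesis by (simp add: N_zero)
qed

lemma T_count:
  assumes "2 \<le> k" "k + 2 \<le> n" "1 \<le> t"
  shows "real (card (dilate_lattice_points n (T_bases k n) t))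
       = (\<Sum>b\<le>t. pb (k - 1) (real b) * pb (n - k - 1) (real b))"
proof -
  have kn: "k \<le> n" using assms by simp
  have c1: "card (dilate_lattice_points n (T_bases k n) t) = (\<Sum>a\<in>{(k - 1) * t..k * t}. N k t a * N (n - k) t (k * t - a))"
    using assms by (simp add: T_bases_eq H_eq Hf_count)
  have img: "(\<lambda>b. k * t - b) ` {0..t} = {(k - 1) * t..k * t}"
  proof (rule set_eqI)
    fix a
    have kt: "(k - 1) * t = k * t - t" by (simp add: diff_mult_distrib)
    have tk: "t \<le> k * t" using assms by simp
    show "a \<in> (\<lambda>b. k * t - b) ` {0..t} \<longleftrightarrow> a \<in> {(k - 1) * t..k * t}"
    proof
      assume "a \<in> (\<lambda>b. k * t - b) ` {0..t}"
      then show "a \<in> {(k - 1) * t..k * t}" using kt tk by auto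
    next
      assume a: "a \<in> {(k - 1) * t..k * t}"
      then have "a = k * t - (k * t - a)" "k * t - a \<in> {0..t}" using kt tk by auto
      then show "a \<in> (\<lambda>b. k * t - b) ` {0..t}" by blast
    qed
  qed
  have tk0: "t \<le> k * t" using assms by simp
  have inj: "inj_on (\<lambda>b. k * t - b) {0..t}"
  proof (rule inj_onI)
    fix x y assume xy: "x \<in> {0..t}" "y \<in> {0..t}" and e: "k * t - x = k * t - y"
    have "x \<le> t" using xy(1) by simp
    then have x1: "x \<le> k * t" using tk0 by (rule le_trans)
    have "y \<le> t" using xy(2) by simp
    then have y1: "y \<le> k * t" using tk0 by (rule le_trans)
    have "x = k * t - (k * t - x)" by (rule diff_diff_cancel[OF x1, symmetric])
    also have "\<dots> = k * t - (k * t - y)" unfolding e ..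
    also have "\<dots> = y" by (rule diff_diff_cancel[OF y1])
    finally show "x = y" .
  qed
  have "(\<Sum>a\<in>{(k - 1) * t..k * t}. N k t a * N (n - k) t (k * t - a))
      = (\<Sum>b\<in>{0..t}. N k t (k * t - b) * N (n - k) t (k * t - (k * t - b)))"
  proof -
    define f where "f = (\<lambda>a. N k t a * N (n - k) t (k * t - a))"
    have "sum f ((\<lambda>b. k * t - b) ` {0..t}) = sum (f \<circ> (\<lambda>b. k * t - b)) {0..t}"
      by (rule sum.reindex[OF inj])
    then have "sum f {(k - 1) * t..k * t} = sum (f \<circ> (\<lambda>b. k * t - b)) {0..t}"
      unfolding img .
    then show ?thesis unfolding f_def comp_def .
  qed
  also have "\<dots> = (\<Sum>b\<in>{0..t}. N k t b * N (n - k) t b)"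
  proof (rule sum.cong[OF refl])
    fix b assume "b \<in> {0..t}"
    then have b: "b \<le> t" by simp
    have tk: "t \<le> k * t" using assms by simp
    have kb: "k * t - (k * t - b) = b" using le_trans[OF b tk] by (rule diff_diff_cancel)
    have "N k t (k * t - b) = N k t (k * t - (k * t - b))" by (rule N_sym) simp
    then have "N k t (k * t - b) = N k t b" unfolding kb .
    then show "N k t (k * t - b) * N (n - k) t (k * t - (k * t - b)) = N k t b * N (n - k) t b"
      unfolding kb by simp
  qed
  finally have "real (card (dilate_lattice_points n (T_bases k n) t)) = (\<Sum>b\<in>{0..t}. real (N k t b) * real (N (n - k) t b))"
    using c1 by simp
  also have "\<dots> = (\<Sum>b\<in>{0..t}. pb (k - 1) (real b) * pb (n - k - 1) (real b))"
  proof (rule sum.cong[OF refl])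
    fix b assume "b \<in> {0..t}"
    then have b: "b \<le> t" by simp
    have k1: "1 \<le> k" "1 \<le> n - k" using assms by auto
    show "real (N k t b) * real (N (n - k) t b) = pb (k - 1) (real b) * pb (n - k - 1) (real b)"
      using Nsmall[OF k1(1) b] Nsmall[OF k1(2) b] by simp
  qed
  also have "\<dots> = (\<Sum>b\<le>t. pb (k - 1) (real b) * pb (n - k - 1) (real b))"
    by (simp add: atMost_atLeast0)
  finally show ?thesis .
qed

theorem lemma6p2:
  fixes k n :: nat
  assumes "2 \<le> k" and "k + 2 \<le> n"
  shows "ehrhart_poly n (Sp_bases k n) = ehrhart_poly n (Sp_bases (n - k) n)
       \<and> ehrhart_poly n (Sp_bases k n) =
         ehrhart_poly n (U_bases k n) - pcompose (ehrhart_poly n (T_bases k n)) [:-1, 1:]"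
proof -
  define UP where "UP = (\<lambda>x. \<Sum>j\<le>k. (-1)^j * real (n choose j) * pb (n - 1) ((real k - real j) * x + (- real j)))"
  have "ispoly (\<lambda>x. (-1)^j * real (n choose j) * pb (n - 1) ((real k - real j) * x + (- real j)))" for j
  proof -
    have "ispoly (\<lambda>x. pb (n - 1) ((real k - real j) * x + (- real j)))" by (rule ispoly_lin[OF pb_ispoly])
    then show ?thesis by (rule ispoly_mult[OF ispoly_const])
  qed
  then have "ispoly UP" unfolding UP_def by (rule ispoly_sum)
  then obtain PU where PU: "\<And>x. UP x = poly PU x" by (auto simp: ispoly_def)
  define Gv where "Gv = (\<lambda>s. \<Sum>b\<le>s. pb (k - 1) (real b) * pb (n - k - 1) (real b))"
  have "ispoly (\<lambda>x. pb (k - 1) x * pb (n - k - 1) x)" by (rule ispoly_mult[OF pb_ispoly pb_ispoly])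
  from psum[OF this] have "natpoly Gv" unfolding Gv_def by simp
  then obtain PG where PG: "\<And>s. Gv s = poly PG (real s)" by (auto simp: natpoly_def)
  have Gm: "(\<Sum>a<t. pb (k - 1) (real a) * pb (n - k - 1) (real a)) = poly PG (real t - 1)" if "1 \<le> t" for t
  proof -
    have "{..<t} = {..t - 1}" using that by auto
    then have "(\<Sum>a<t. pb (k - 1) (real a) * pb (n - k - 1) (real a)) = Gv (t - 1)" by (simp add: Gv_def)
    also have "\<dots> = poly PG (real t - 1)" using that by (simp add: PG of_nat_diff)
    finally show ?thesis .
  qed
  have UPe: "UP (real t) = real (N n t (k * t))" for t
    unfolding UP_def by (rule U_count[OF assms, symmetric])
  have hU: "ehrhart_poly n (U_bases k n) = PU"
  proof (rule ehr_eq, intro allI impI)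
    fix t :: nat assume t: "1 \<le> t"
    have "poly PU (real t) = UP (real t)" by (rule PU[symmetric])
    also have "\<dots> = real (N n t (k * t))" by (rule UPe)
    also have "\<dots> = real (card (dilate_lattice_points n (U_bases k n) t))" by (rule U_count2[OF assms t, symmetric])
    finally show "poly PU (real t) = real (card (dilate_lattice_points n (U_bases k n) t))" .
  qed
  have hT: "ehrhart_poly n (T_bases k n) = PG"
  proof (rule ehr_eq, intro allI impI)
    fix t :: nat assume t: "1 \<le> t"
    have "poly PG (real t) = Gv t" by (rule PG[symmetric])
    also have "\<dots> = real (card (dilate_lattice_points n (T_bases k n) t))"
      unfolding Gv_def by (rule T_count[OF assms t, symmetric])
    finally show "poly PG (real t) = real (card (dilate_lattice_points n (T_bases k n) t))" .
  qed
  define Q where "Q = PU - pcompose PG [:-1, 1:]"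
  have pQ: "poly Q (real t) = UP (real t) - poly PG (real t - 1)" for t
    by (simp add: Q_def poly_pcompose PU)
  have h1: "ehrhart_poly n (Sp_bases k n) = Q"
  proof (rule ehr_eq, intro allI impI)
    fix t :: nat assume t: "1 \<le> t"
    have a1: "1 \<le> k" using assms by simp
    show "poly Q (real t) = real (card (dilate_lattice_points n (Sp_bases k n) t))"
      unfolding pQ Sp_count[OF a1 assms(2) t] Gm[OF t, symmetric] UPe ..
  qed
  have h2: "ehrhart_poly n (Sp_bases (n - k) n) = Q"
  proof (rule ehr_eq, intro allI impI)
    fix t :: nat assume t: "1 \<le> t"
    have a1: "1 \<le> n - k" "n - k + 2 \<le> n" using assms by auto
    have "(\<Sum>a<t. pb (n - k - 1) (real a) * pb (n - (n - k) - 1) (real a))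
        = (\<Sum>a<t. pb (k - 1) (real a) * pb (n - k - 1) (real a))"
      using assms by (simp add: mult.commute)
    moreover have Ns: "N n t ((n - k) * t) = N n t (k * t)"
    proof -
      have "N n t ((n - k) * t) = N n t (n * t - (n - k) * t)" by (rule N_sym) (simp add: mult_le_mono1)
      also have "n * t - (n - k) * t = k * t" using assms by (simp add: diff_mult_distrib)
      finally show ?thesis .
    qed
    ultimately show "poly Q (real t) = real (card (dilate_lattice_points n (Sp_bases (n - k) n) t))"
      unfolding pQ Sp_count[OF a1 t] Gm[OF t, symmetric] UPe by simp
  qed
  show ?thesis using h1 h2 hU hT by (simp add: Q_def)
qed

end
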